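(* Let $c\in\mathbb{C}^n$, let $\rho(z)=z+c$ be the corresponding translation of $\mathbb{C}^{n}$, let $d\geq 1$ be an integer, and let $V\subseteq\mathcal{O}_{d}(\mathbb{C}^{n})$ be a complex linear subspace such that $g\circ\rho=g$ for every $g\in V$. If \[ \dim V \geq \dim\mathcal{O}_{d}(\mathbb{C}^{n})-\binom{n+d-1}{d-1}+1, \] then $c=0$.
   Context: $\mathcal{O}_d(\mathbb{C}^n)$ denotes the space of holomorphic functions $f$ on $\mathbb{C}^n$ with $|f(z)|\leq C(1+|z|)^d$ for some constant $C$; equivalently, the space of polynomials on $\mathbb{C}^n$ of degree at most $d$, which has dimension $\binom{n+d}{d}$. *)

theory Defs
  imports "HOL-Analysis.Analysis" "HOL-Library.Function_Algebras"
begin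

definition fscale :: "complex \<Rightarrow> ('a \<Rightarrow> complex) \<Rightarrow> ('a \<Rightarrow> complex)" where
  "fscale a f = (\<lambda>z. a * f z)"

lemma vector_space_fscale: "vector_space fscale"
  by unfold_locales (auto simp: fscale_def algebra_simps fun_eq_iff)

text \<open>O_d(C^n): polynomial functions on C^n of total degree at most d,
  C^n being rendered as complex^'n with n = CARD('n).\<close>
definition Od :: "nat \<Rightarrow> (complex^'n \<Rightarrow> complex) set" where
  "Od d = {f. \<exists>a :: ('n \<Rightarrow> nat) \<Rightarrow> complex.
     f = (\<lambda>z. \<Sum>\<alpha>\<in>{\<alpha>::'n \<Rightarrow> nat. sum \<alpha> UNIV \<le> d}. a \<alpha> * (\<Prod>i\<in>UNIV. (z $ i) ^ (\<alpha> i)))}"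

end

theory Submission
  imports Defs "HOL-Computational_Algebra.Polynomial"
begin

interpretation F: vector_space fscale by (rule vector_space_fscale)

definition mnm :: "('n \<Rightarrow> nat) \<Rightarrow> complex^'n \<Rightarrow> complex" where
  "mnm \<alpha> = (\<lambda>z. \<Prod>i\<in>UNIV. (z $ i) ^ (\<alpha> i))"

lemma span_pred:
  assumes "f \<in> F.span X" "P 0" "\<And>f g. P f \<Longrightarrow> P g \<Longrightarrow> P (f + g)"
    "\<And>c f. P f \<Longrightarrow> P (fscale c f)" "\<And>x. x \<in> X \<Longrightarrow> P x"
  shows "P f"
  using assms(1)
proof (induct rule: F.span_induct)
  case step
  then show ?case using assms(5) by auto
next
  show "F.subspace (Collect P)" using assms(2-4) by (auto simp: F.subspace_def)
qed

lemma line_poly: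
  fixes f :: "complex^'n \<Rightarrow> complex"
  assumes "f \<in> F.span (range mnm)"
  shows "\<exists>Q. \<forall>t. f (\<chi> i. w$i + t * v$i) = poly Q t"
  using assms
proof (rule span_pred)
  show "\<exists>Q. \<forall>t. (0::complex^'n \<Rightarrow> complex) (\<chi> i. w$i + t * v$i) = poly Q t"
    by (rule exI[of _ 0]) simp
next
  fix f g :: "complex^'n \<Rightarrow> complex"
  assume "\<exists>Q. \<forall>t. f (\<chi> i. w$i + t * v$i) = poly Q t" "\<exists>Q. \<forall>t. g (\<chi> i. w$i + t * v$i) = poly Q t"
  then obtain P Q where "\<forall>t. f (\<chi> i. w$i + t * v$i) = poly P t" "\<forall>t. g (\<chi> i. w$i + t * v$i) = poly Q t" by blast
  then show "\<exists>Q. \<forall>t. (f + g) (\<chi> i. w$i + t * v$i) = poly Q t"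
    by (intro exI[of _ "P + Q"]) simp
next
  fix c and f :: "complex^'n \<Rightarrow> complex"
  assume "\<exists>Q. \<forall>t. f (\<chi> i. w$i + t * v$i) = poly Q t"
  then obtain P where "\<forall>t. f (\<chi> i. w$i + t * v$i) = poly P t" by blast
  then show "\<exists>Q. \<forall>t. (fscale c f) (\<chi> i. w$i + t * v$i) = poly Q t"
    by (intro exI[of _ "smult c P"]) (simp add: fscale_def)
next
  fix x assume "x \<in> range (mnm :: _ \<Rightarrow> complex^'n \<Rightarrow> complex)"
  then obtain \<alpha> where x: "x = mnm \<alpha>" by auto
  show "\<exists>Q. \<forall>t. x (\<chi> i. w$i + t * v$i) = poly Q t"
    by (intro exI[of _ "\<Prod>i\<in>UNIV. [:w$i, v$i:] ^ \<alpha> i"])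
       (simp add: x mnm_def poly_prod algebra_simps)
qed

lemma poly_const_if_inf:
  fixes Q :: "complex poly"
  assumes "infinite {t. poly Q t = a}"
  shows "poly Q s = a"
proof -
  have "Q - [:a:] = 0"
  proof (rule ccontr)
    assume "Q - [:a:] \<noteq> 0"
    from poly_roots_finite[OF this] have "finite {t. poly Q t = a}" by simp
    with assms show False by simp
  qed
  then have "Q = [:a:]" by simp
  then show ?thesis by simp
qed


lemma indep_union:
  assumes A: "F.independent A" and B: "F.independent B"
    and AB: "\<And>x. x \<in> F.span A \<Longrightarrow> x \<in> F.span B \<Longrightarrow> x = 0"
  shows "F.independent (A \<union> B)"
  unfolding F.independent_explicit_finite_subsets
proof (intro allI impI ballI)
  fix S u v
  assume S: "S \<subseteq> A \<union> B" "finite S" and sum0: "(\<Sum>v\<in>S. fscale (u v) v) = 0" and v: "v \<in> S"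
  define SA where "SA = S \<inter> A"
  define SB where "SB = S - A"
  have fin: "finite SA" "finite SB" using S by (auto simp: SA_def SB_def)
  have "(\<Sum>v\<in>S. fscale (u v) v) = (\<Sum>v\<in>SA. fscale (u v) v) + (\<Sum>v\<in>SB. fscale (u v) v)"
    unfolding SA_def SB_def by (rule sum.Int_Diff[OF S(2)])
  then have eq: "(\<Sum>v\<in>SA. fscale (u v) v) = - (\<Sum>v\<in>SB. fscale (u v) v)"
    using sum0 by (simp add: eq_neg_iff_add_eq_0)
  have inA: "(\<Sum>v\<in>SA. fscale (u v) v) \<in> F.span A"
    by (intro F.span_sum F.span_scale F.span_base) (auto simp: SA_def)
  have "(\<Sum>v\<in>SB. fscale (u v) v) \<in> F.span B"
    using S(1) by (intro F.span_sum F.span_scale F.span_base) (auto simp: SB_def)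
  then have inB: "(\<Sum>v\<in>SA. fscale (u v) v) \<in> F.span B" unfolding eq by (rule F.span_neg)
  have zA: "(\<Sum>v\<in>SA. fscale (u v) v) = 0" using AB[OF inA inB] .
  then have zB: "(\<Sum>v\<in>SB. fscale (u v) v) = 0" using eq by simp
  have HA: "\<forall>S\<subseteq>A. finite S \<longrightarrow> (\<forall>u. (\<Sum>v\<in>S. fscale (u v) v) = 0 \<longrightarrow> (\<forall>v\<in>S. u v = 0))"
    using A by (simp only: F.independent_explicit_finite_subsets)
  have HB: "\<forall>S\<subseteq>B. finite S \<longrightarrow> (\<forall>u. (\<Sum>v\<in>S. fscale (u v) v) = 0 \<longrightarrow> (\<forall>v\<in>S. u v = 0))"
    using B by (simp only: F.independent_explicit_finite_subsets)
  have "SA \<subseteq> A" "SB \<subseteq> B" using S(1) by (auto simp: SA_def SB_def)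
  have "\<forall>v\<in>SA. u v = 0" using HA \<open>SA \<subseteq> A\<close> fin(1) zA by blast
  moreover have "\<forall>v\<in>SB. u v = 0" using HB \<open>SB \<subseteq> B\<close> fin(2) zB by blast
  moreover have "v \<in> SA \<or> v \<in> SB" using v by (auto simp: SA_def SB_def)
  ultimately show "u v = 0" by blast
qed

definition mk :: "'n \<Rightarrow> (complex^'n \<Rightarrow> complex) \<Rightarrow> complex^'n \<Rightarrow> complex" where
  "mk k f = (\<lambda>z. z$k * f z)"

lemma mk_mnm: "mk k (mnm \<alpha>) = mnm (\<alpha>(k := Suc (\<alpha> k)))"
proof -
  have "mk k (mnm \<alpha>) z = mnm (\<alpha>(k := Suc (\<alpha> k))) z" for z
  proof -
    have "mnm (\<alpha>(k := Suc (\<alpha> k))) z = z$k ^ Suc (\<alpha> k) * (\<Prod>i\<in>UNIV-{k}. z$i ^ \<alpha> i)"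
      unfolding mnm_def by (subst prod.remove[of _ k]) auto
    moreover have "mnm \<alpha> z = z$k ^ (\<alpha> k) * (\<Prod>i\<in>UNIV-{k}. z$i ^ \<alpha> i)"
      unfolding mnm_def by (subst prod.remove[of _ k]) auto
    ultimately show ?thesis by (simp add: mk_def)
  qed
  then show ?thesis by auto
qed

lemma sum_upd_Suc: "sum (\<alpha>(k := Suc (\<alpha> k))) (UNIV::'n::finite set) = Suc (sum \<alpha> UNIV)"
proof -
  have "sum (\<alpha>(k := Suc (\<alpha> k))) (UNIV::'n set) = Suc (\<alpha> k) + sum (\<alpha>(k := Suc (\<alpha> k))) (UNIV-{k})"
    by (subst sum.remove[of _ k]) auto
  also have "sum (\<alpha>(k := Suc (\<alpha> k))) (UNIV-{k}) = sum \<alpha> (UNIV-{k})"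
    by (rule sum.cong) auto
  also have "sum \<alpha> (UNIV::'n set) = \<alpha> k + sum \<alpha> (UNIV-{k})"
    by (subst sum.remove[of _ k]) auto
  ultimately show ?thesis by simp
qed

lemma mk_span: "f \<in> F.span X \<Longrightarrow> mk k f \<in> F.span (mk k ` X)"
proof (erule span_pred[where P="\<lambda>f. mk k f \<in> F.span (mk k ` X)"])
  show "mk k 0 \<in> F.span (mk k ` X)" using F.span_zero by (simp add: mk_def zero_fun_def)
  show "mk k (f + g) \<in> F.span (mk k ` X)" if "mk k f \<in> F.span (mk k ` X)" "mk k g \<in> F.span (mk k ` X)" for f g
  proof -
    have "mk k (f + g) = mk k f + mk k g" by (auto simp: mk_def algebra_simps)
    then show ?thesis using F.span_add[OF that] by simp
  qed
  show "mk k (fscale c f) \<in> F.span (mk k ` X)" if "mk k f \<in> F.span (mk k ` X)" for c f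
  proof -
    have "mk k (fscale c f) = fscale c (mk k f)" by (auto simp: mk_def fscale_def algebra_simps)
    then show ?thesis using F.span_scale[OF that] by simp
  qed
  show "mk k x \<in> F.span (mk k ` X)" if "x \<in> X" for x using that by (simp add: F.span_base)
qed

lemma poly_fun_zero:
  fixes f :: "complex^'n \<Rightarrow> complex"
  assumes f: "f \<in> F.span (range mnm)" and z: "\<And>z. z$k \<noteq> 0 \<Longrightarrow> f z = 0"
  shows "f = 0"
proof
  fix z :: "complex^'n"
  obtain Q where Q: "\<And>t. f (\<chi> i. z$i + t * (axis k 1 :: complex^'n)$i) = poly Q t"
    using line_poly[OF f] by blast
  have "{t. t \<noteq> - z$k} \<subseteq> {t. poly Q t = 0}"
  proof
    fix t assume "t \<in> {t. t \<noteq> - z$k}"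
    then have "t \<noteq> - z$k" by simp
    then have "z$k + t \<noteq> 0" by (metis add_eq_0_iff)
    then have "(\<chi> i. z$i + t * (axis k 1 :: complex^'n)$i) $ k \<noteq> 0"
      by (simp add: axis_def)
    then have "f (\<chi> i. z$i + t * (axis k 1 :: complex^'n)$i) = 0" by (rule z)
    then show "t \<in> {t. poly Q t = 0}" using Q[of t] by simp
  qed
  moreover have "infinite {t::complex. t \<noteq> - z$k}"
  proof -
    have "{t::complex. t \<noteq> - z$k} = UNIV - {- z$k}" by auto
    then show ?thesis using infinite_UNIV_char_0[where 'a=complex] by simp
  qed
  ultimately have "infinite {t. poly Q t = 0}" by (meson finite_subset)
  from poly_const_if_inf[OF this, of 0] Q[of 0] show "f z = 0 z"
    by (simp add: vec_eq_iff)
qed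


lemma mk_zero_imp:
  assumes f: "f \<in> F.span (range mnm)" and "mk k f = 0"
  shows "f = 0"
proof (rule poly_fun_zero[OF f, of k])
  fix z :: "complex^'a" assume "z$k \<noteq> 0"
  moreover have "z$k * f z = 0" using fun_cong[OF assms(2), of z] by (simp add: mk_def)
  ultimately show "f z = 0" by simp
qed

lemma mk_hom: "module_hom fscale fscale (mk k)"
  unfolding module_hom_iff
proof (intro conjI allI)
  show "module fscale" by (rule F.module_axioms)
  show "module fscale" by (rule F.module_axioms)
  show "mk k (x + y) = mk k x + mk k y" for x y by (simp add: mk_def fun_eq_iff algebra_simps)
  show "mk k (fscale c x) = fscale c (mk k x)" for c x by (simp add: mk_def fscale_def fun_eq_iff algebra_simps)
qed

lemma mk_indep:
  assumes B: "F.independent B" "B \<subseteq> F.span (range mnm)"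
  shows "F.independent (mk k ` B)" "inj_on (mk k) B"
proof -
  have sp: "F.span B \<subseteq> F.span (range mnm)" using B(2) F.span_mono F.span_span
    by (metis F.span_minimal F.subspace_span)
  have inj: "inj_on (mk k) (F.span B)"
  proof (rule inj_onI)
    fix f g assume fg: "f \<in> F.span B" "g \<in> F.span B" "mk k f = mk k g"
    have "f - g \<in> F.span (range mnm)" using fg sp F.span_diff by blast
    moreover have "mk k (f - g) = 0" proof -
      have "mk k (f - g) = mk k f - mk k g" by (simp add: mk_def fun_eq_iff algebra_simps)
      then show ?thesis using fg(3) by simp
    qed
    ultimately have "f - g = 0" by (rule mk_zero_imp)
    then show "f = g" by simp
  qed
  show "F.independent (mk k ` B)"
    using module_hom.independent_injective_image[OF mk_hom B(1) inj] .
  show "inj_on (mk k) B" using inj F.span_superset inj_on_subset by blast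
qed

definition PF :: "'n set \<Rightarrow> nat \<Rightarrow> (complex^'n::finite \<Rightarrow> complex) set" where
  "PF S m = F.span (mnm ` {\<alpha>. sum \<alpha> UNIV \<le> m \<and> (\<forall>i. i \<notin> S \<longrightarrow> \<alpha> i = 0)})"

lemma PF_poly: "PF S m \<subseteq> F.span (range mnm)"
  unfolding PF_def by (rule F.span_mono) auto

lemma vanish_span:
  assumes "g \<in> F.span (mk k ` X)" "z$k = 0"
  shows "g z = 0"
  using assms(1)
  by (rule span_pred[where P="\<lambda>g. g z = 0"]) (auto simp: fscale_def mk_def assms(2))

lemma PF_indep_k:
  assumes "k \<notin> S" "f \<in> PF S m"
  shows "f z = f (\<chi> i. if i = k then 0 else z$i)"
  using assms(2) unfolding PF_def
proof (rule span_pred[where P="\<lambda>f. f z = f (\<chi> i. if i = k then 0 else z$i)"])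
  fix x assume "x \<in> mnm ` {\<alpha>. sum \<alpha> UNIV \<le> m \<and> (\<forall>i. i \<notin> S \<longrightarrow> \<alpha> i = 0)}"
  then obtain \<alpha> where x: "x = mnm \<alpha>" and "\<alpha> k = 0" using assms(1) by auto
  have "(\<Prod>i\<in>UNIV. z $ i ^ \<alpha> i) = (\<Prod>i\<in>UNIV. (\<chi> i. if i = k then 0 else z$i) $ i ^ \<alpha> i)"
    by (rule prod.cong) (auto simp: \<open>\<alpha> k = 0\<close>)
  then show "x z = x (\<chi> i. if i = k then 0 else z$i)"
    unfolding x mnm_def by simp
qed (auto simp: fscale_def)


lemma PF_mono: "S \<subseteq> T \<Longrightarrow> m \<le> m' \<Longrightarrow> PF S m \<subseteq> PF T m'"
  unfolding PF_def by (intro F.span_mono image_mono) auto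

lemma PF_subspace: "F.subspace (PF S m)"
  unfolding PF_def by simp

lemma one_in_PF: "mnm (\<lambda>_. 0) \<in> PF S m"
  unfolding PF_def by (rule F.span_base) auto

lemma one_nz: "mnm (\<lambda>_. 0) \<noteq> 0"
proof
  assume "mnm (\<lambda>_. 0) = (0 :: complex^'n \<Rightarrow> complex)"
  then have "mnm (\<lambda>_. 0) (0 :: complex^'n) = 0" by simp
  then show False by (simp add: mnm_def)
qed

lemma one_basis: "\<exists>B. finite B \<and> B \<subseteq> PF S m \<and> F.independent B \<and> card B = 1"
  by (intro exI[of _ "{mnm (\<lambda>_. 0)}"]) (simp add: one_in_PF one_nz)

lemma mk_PF: "k \<in> S \<Longrightarrow> f \<in> PF S m \<Longrightarrow> mk k f \<in> PF S (Suc m)"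
proof -
  assume k: "k \<in> S" and f: "f \<in> PF S m"
  let ?I = "{\<alpha>. sum \<alpha> UNIV \<le> m \<and> (\<forall>i. i \<notin> S \<longrightarrow> \<alpha> i = 0)}"
  have "mk k f \<in> F.span (mk k ` mnm ` ?I)" using f unfolding PF_def by (rule mk_span)
  moreover have "mk k ` mnm ` ?I \<subseteq> PF S (Suc m)"
  proof
    fix x assume "x \<in> mk k ` mnm ` ?I"
    then obtain \<alpha> where a: "\<alpha> \<in> ?I" and x: "x = mnm (\<alpha>(k := Suc (\<alpha> k)))"
      by (auto simp: mk_mnm)
    have "\<alpha>(k := Suc (\<alpha> k)) \<in> {\<alpha>. sum \<alpha> UNIV \<le> Suc m \<and> (\<forall>i. i \<notin> S \<longrightarrow> \<alpha> i = 0)}"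
    proof -
      have "sum (\<alpha>(k := Suc (\<alpha> k))) UNIV \<le> Suc m" using a by (simp only: sum_upd_Suc) simp
      moreover have "\<forall>i. i \<notin> S \<longrightarrow> (\<alpha>(k := Suc (\<alpha> k))) i = 0" using a k by auto
      ultimately show ?thesis by blast
    qed
    then show "x \<in> PF S (Suc m)" unfolding PF_def x by (rule F.span_base[OF imageI])
  qed
  ultimately show ?thesis using PF_subspace F.span_minimal by blast
qed

lemma count:
  fixes S :: "'n::finite set"
  shows "\<exists>B. finite B \<and> B \<subseteq> PF S m \<and> F.independent B \<and> card B = (card S + m choose m)"
proof -
  have "finite S" by simp
  then show ?thesis
  proof (induction S arbitrary: m rule: finite_induct)
    case empty
    show ?case using one_basis by simp
  next
    case (insert k S)
    show ?case
    proof (induction m)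
      case 0
      show ?case using one_basis by simp
    next
      case (Suc m)
      obtain B1 where B1: "finite B1" "B1 \<subseteq> PF S (Suc m)" "F.independent B1"
        "card B1 = (card S + Suc m choose Suc m)" using insert.IH by blast
      obtain B2 where B2: "finite B2" "B2 \<subseteq> PF (insert k S) m" "F.independent B2"
        "card B2 = (card (insert k S) + m choose m)" using Suc.IH by blast
      have B2p: "B2 \<subseteq> F.span (range mnm)" using B2(2) PF_poly by blast
      note mi = mk_indep[OF B2(3) B2p, of k]
      have zero: "x = 0" if "x \<in> F.span B1" "x \<in> F.span (mk k ` B2)" for x
      proof
        fix z :: "complex^'n"
        have "x \<in> PF S (Suc m)" using that(1) B1(2) PF_subspace F.span_minimal by blast
        then have "x z = x (\<chi> i. if i = k then 0 else z$i)" using PF_indep_k insert.hyps(2) by blast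
        also have "\<dots> = 0" by (rule vanish_span[OF that(2)]) simp
        finally show "x z = 0 z" by simp
      qed
      have ind: "F.independent (B1 \<union> mk k ` B2)"
        by (rule indep_union[OF B1(3) mi(1) zero])
      have disj: "B1 \<inter> mk k ` B2 = {}"
      proof (rule ccontr)
        assume "B1 \<inter> mk k ` B2 \<noteq> {}"
        then obtain x where "x \<in> B1" "x \<in> mk k ` B2" by blast
        then have "x = 0" using zero F.span_base by blast
        then show False using \<open>x \<in> B1\<close> B1(3) F.dependent_zero by blast
      qed
      have sub1: "B1 \<subseteq> PF (insert k S) (Suc m)" using B1(2) PF_mono[of S "insert k S" "Suc m" "Suc m"] by blast
      have sub2: "mk k ` B2 \<subseteq> PF (insert k S) (Suc m)" using B2(2) mk_PF[of k "insert k S"] by blast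
      have "card (B1 \<union> mk k ` B2) = card B1 + card B2"
        using card_Un_disjoint[OF B1(1) _ disj] B2(1) card_image[OF mi(2)] by simp
      also have "\<dots> = (card (insert k S) + Suc m choose Suc m)"
        using B1(4) B2(4) insert.hyps by simp
      finally show ?case using ind sub1 sub2 B1(1) B2(1)
        by (intro exI[of _ "B1 \<union> mk k ` B2"]) auto
    qed
  qed
qed


lemma transl_zero:
  fixes g :: "complex^'n \<Rightarrow> complex"
  assumes g: "g \<in> F.span (range mnm)" and inv: "\<And>z. g (z + c) = g z" and ck: "c$k \<noteq> 0"
    and van: "\<And>z. z$k = 0 \<Longrightarrow> g z = 0"
  shows "g = 0"
proof
  fix z :: "complex^'n"
  define w :: "complex^'n" where "w = (\<chi> i. z$i - (z$k/c$k) * c$i)"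
  obtain Q where Q: "\<And>t. g (\<chi> i. w$i + t * c$i) = poly Q t"
    using line_poly[OF g] by blast
  have wk: "w$k = 0" using ck by (simp add: w_def)
  have gm: "g (\<chi> i. w$i + of_nat m * c$i) = g w" for m
  proof (induction m)
    case 0
    have "(\<chi> i. w$i + of_nat 0 * c$i) = w" by (simp add: vec_eq_iff)
    then show ?case by simp
  next
    case (Suc m)
    have "(\<chi> i. w$i + of_nat (Suc m) * c$i) = (\<chi> i. w$i + of_nat m * c$i) + c"
      by (simp add: vec_eq_iff algebra_simps)
    then show ?case using inv Suc.IH by simp
  qed
  have "range (of_nat :: nat \<Rightarrow> complex) \<subseteq> {t. poly Q t = 0}"
  proof
    fix t assume "t \<in> range (of_nat :: nat \<Rightarrow> complex)"
    then obtain m where "t = of_nat m" by blast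
    then show "t \<in> {t. poly Q t = 0}" using Q[of t] gm[of m] van[OF wk] by simp
  qed
  moreover have "infinite (range (of_nat :: nat \<Rightarrow> complex))"
    by (rule range_inj_infinite) (simp add: inj_on_def)
  ultimately have inf: "infinite {t. poly Q t = 0}" using finite_subset by blast
  have "(\<chi> i. w$i + (z$k/c$k) * c$i) = z" by (simp add: w_def vec_eq_iff)
  then have "g z = poly Q (z$k/c$k)" using Q by metis
  also have "\<dots> = 0" by (rule poly_const_if_inf[OF inf])
  finally show "g z = 0 z" by simp
qed

lemma sum_fun: "(\<Sum>\<alpha>\<in>A. f \<alpha>) z = (\<Sum>\<alpha>\<in>A. f \<alpha> z)"
  for f :: "'b \<Rightarrow> 'c \<Rightarrow> complex"
  by (induct A rule: infinite_finite_induct) auto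

lemma finite_deg: "finite {\<alpha>::'n::finite \<Rightarrow> nat. sum \<alpha> UNIV \<le> d}"
proof (rule finite_subset)
  show "{\<alpha>::'n \<Rightarrow> nat. sum \<alpha> UNIV \<le> d} \<subseteq> PiE UNIV (\<lambda>_. {..d})"
  proof
    fix \<alpha> :: "'n \<Rightarrow> nat" assume "\<alpha> \<in> {\<alpha>. sum \<alpha> UNIV \<le> d}"
    then have "\<alpha> i \<le> d" for i using member_le_sum[of i UNIV \<alpha>] by auto
    then show "\<alpha> \<in> PiE UNIV (\<lambda>_. {..d})" by auto
  qed
  show "finite (PiE (UNIV::'n set) (\<lambda>_. {..d}))" by (rule finite_PiE) auto
qed

lemma Od_PF: "Od d \<subseteq> PF UNIV d"
proof
  fix f :: "complex^'n::finite \<Rightarrow> complex" assume "f \<in> Od d"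
  then obtain a where f: "f = (\<lambda>z. \<Sum>\<alpha>\<in>{\<alpha>::'n \<Rightarrow> nat. sum \<alpha> UNIV \<le> d}. a \<alpha> * (\<Prod>i\<in>UNIV. (z $ i) ^ (\<alpha> i)))"
    unfolding Od_def by blast
  have "f = (\<Sum>\<alpha>\<in>{\<alpha>::'n \<Rightarrow> nat. sum \<alpha> UNIV \<le> d}. fscale (a \<alpha>) (mnm \<alpha>))"
    by (simp add: f fun_eq_iff sum_fun fscale_def mnm_def)
  also have "\<dots> \<in> PF UNIV d" unfolding PF_def
    by (intro F.span_sum F.span_scale F.span_base) auto
  finally show "f \<in> PF UNIV d" .
qed

lemma PF_Od: "PF UNIV d \<subseteq> F.span (Od d)"
  unfolding PF_def
proof (rule F.span_mono, rule)
  fix f assume "f \<in> mnm ` {\<alpha>::'n::finite \<Rightarrow> nat. sum \<alpha> UNIV \<le> d \<and> (\<forall>i. i \<notin> UNIV \<longrightarrow> \<alpha> i = 0)}"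
  then obtain \<beta> where b: "sum \<beta> UNIV \<le> d" and f: "f = mnm \<beta>" by auto
  have "f = (\<lambda>z. \<Sum>\<alpha>\<in>{\<alpha>::'n \<Rightarrow> nat. sum \<alpha> UNIV \<le> d}. (if \<alpha> = \<beta> then 1 else 0) * (\<Prod>i\<in>UNIV. (z $ i) ^ (\<alpha> i)))"
  proof
    fix z :: "complex^'n"
    let ?A = "{\<alpha>::'n \<Rightarrow> nat. sum \<alpha> UNIV \<le> d}"
    have "(\<Sum>\<alpha>\<in>?A. (if \<alpha> = \<beta> then 1 else 0) * (\<Prod>i\<in>UNIV. (z $ i) ^ (\<alpha> i)))
        = (\<Sum>\<alpha>\<in>?A. if \<alpha> = \<beta> then (\<Prod>i\<in>UNIV. (z $ i) ^ (\<alpha> i)) else 0)"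
      by (rule sum.cong) auto
    also have "\<dots> = (\<Prod>i\<in>UNIV. (z $ i) ^ (\<beta> i))"
      using b finite_deg[of d] by (subst sum.delta) auto
    finally show "f z = (\<Sum>\<alpha>\<in>?A. (if \<alpha> = \<beta> then 1 else 0) * (\<Prod>i\<in>UNIV. (z $ i) ^ (\<alpha> i)))"
      by (simp add: f mnm_def)
  qed
  then show "f \<in> Od d" unfolding Od_def mem_Collect_eq
    by (rule exI[of _ "\<lambda>\<alpha>. if \<alpha> = \<beta> then 1 else 0"])
qed


theorem lemma4p2:
  fixes c :: "complex^'n" and d :: nat and V :: "(complex^'n \<Rightarrow> complex) set"
  assumes "d \<ge> 1"
    and "module.subspace fscale V"
    and "V \<subseteq> Od d"
    and "\<forall>g\<in>V. \<forall>z. g (z + c) = g z"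
    and "vector_space.dim fscale V \<ge>
           vector_space.dim fscale (Od d :: (complex^'n \<Rightarrow> complex) set)
           - (CARD('n) + d - 1 choose (d - 1)) + 1"
  shows "c = 0"
proof (rule ccontr)
  assume "c \<noteq> 0"
  then obtain k where ck: "c$k \<noteq> 0" by (auto simp: vec_eq_iff)
  obtain d' where d: "d = Suc d'" using assms(1) by (cases d) auto
  obtain B2 where B2: "finite B2" "B2 \<subseteq> PF (UNIV::'n set) d'" "F.independent B2"
    "card B2 = (CARD('n) + d' choose d')" using count[of "UNIV::'n set" d'] by blast
  have B2p: "B2 \<subseteq> F.span (range mnm)" using B2(2) PF_poly by blast
  note mi = mk_indep[OF B2(3) B2p, of k]
  define BW where "BW = mk k ` B2"
  have cBW: "card BW = (CARD('n) + d' choose d')" unfolding BW_def using card_image[OF mi(2)] B2(4) by simp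
  have BWsub: "BW \<subseteq> PF UNIV d" unfolding BW_def d
    using B2(2) by (intro image_subsetI mk_PF[OF UNIV_I]) blast
  obtain A0 where A0: "A0 \<subseteq> (Od d :: (complex^'n \<Rightarrow> complex) set)" "F.independent A0" "(Od d :: (complex^'n \<Rightarrow> complex) set) \<subseteq> F.span A0" "card A0 = F.dim ((Od d :: (complex^'n \<Rightarrow> complex) set))"
    by (rule F.basis_exists[of "Od d :: (complex^'n \<Rightarrow> complex) set"])
  have finA0: "finite A0"
  proof -
    have "A0 \<subseteq> F.span (mnm ` {\<alpha>. sum \<alpha> UNIV \<le> d \<and> (\<forall>i. i \<notin> (UNIV::'n set) \<longrightarrow> \<alpha> i = 0)})"
      using A0(1) Od_PF unfolding PF_def by blast
    moreover have "finite (mnm ` {\<alpha>. sum \<alpha> UNIV \<le> d \<and> (\<forall>i. i \<notin> (UNIV::'n set) \<longrightarrow> \<alpha> i = 0)})"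
      by (intro finite_imageI) (simp add: finite_deg)
    ultimately show ?thesis using F.independent_span_bound A0(2) by auto
  qed
  obtain BV where BV: "BV \<subseteq> V" "F.independent BV" "V \<subseteq> F.span BV" "card BV = F.dim V"
    by (rule F.basis_exists[of V])
  have spBV: "F.span BV \<subseteq> V" using BV(1) assms(2) F.span_minimal by blast
  have zero: "x = 0" if "x \<in> F.span BV" "x \<in> F.span BW" for x
  proof (rule transl_zero[of x c k])
    show "x \<in> F.span (range mnm)" using that(1) spBV assms(3) Od_PF PF_poly by blast
    show "x (z + c) = x z" for z using that(1) spBV assms(4) by blast
    show "c$k \<noteq> 0" by (rule ck)
    show "x z = 0" if "z$k = 0" for z using vanish_span \<open>x \<in> F.span BW\<close> that unfolding BW_def by blast
  qed
  have ind: "F.independent (BV \<union> BW)"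
    using indep_union[OF BV(2) _ zero] mi(1) unfolding BW_def by blast
  have spOd: "F.span ((Od d :: (complex^'n \<Rightarrow> complex) set)) \<subseteq> F.span A0" using A0(3) F.span_minimal F.subspace_span by blast
  have sub: "BV \<union> BW \<subseteq> F.span A0"
    using BV(1) assms(3) A0(3) BWsub PF_Od spOd by blast
  from F.independent_span_bound[OF finA0 ind sub]
  have fin: "finite (BV \<union> BW)" and le: "card (BV \<union> BW) \<le> card A0" by auto
  have disj: "BV \<inter> BW = {}"
  proof (rule ccontr)
    assume "BV \<inter> BW \<noteq> {}"
    then obtain x where "x \<in> BV" "x \<in> BW" by blast
    then have "x = 0" using zero F.span_base by blast
    then show False using \<open>x \<in> BV\<close> BV(2) F.dependent_zero by blast
  qed
  have "card (BV \<union> BW) = card BV + card BW"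
    using card_Un_disjoint[OF _ _ disj] fin by simp
  then have "F.dim V + (CARD('n) + d' choose d') \<le> F.dim ((Od d :: (complex^'n \<Rightarrow> complex) set))"
    using le A0(4) BV(4) cBW by simp
  moreover have "CARD('n) + d - 1 = CARD('n) + d'" "d - 1 = d'" using d by auto
  ultimately show False using assms(5) by simp
qed

end
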